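(* Let $X \subset \mathbb{R}^{2n}$ be a symplectically self-polar convex body with $C^2$-smooth boundary. Then $\partial X$ has positive curvature at every point (its second fundamental form is positive definite). Moreover, for every $x\in\partial X$ and every nonzero tangent vector $\xi\in T_x\partial X$ one has $\omega(\xi,\nabla_\xi f)>0$, where $\nabla_\xi f$ denotes the derivative of $f$ (viewed as a map $\partial X\to\mathbb{R}^{2n}$) in the direction $\xi$.
   Context: $\mathbb{R}^{2n}\cong\mathbb{C}^n$, $J$ is multiplication by $\sqrt{-1}$, $\omega(u,v)=\langle Ju,v\rangle$ is the standard symplectic form. For a convex body $X$ with the origin in its interior, $X^\omega=\{y: \omega(x,y)\le 1\ \forall x\in X\}$; $X$ is symplectically self-polar if $X=X^\omega$. For a convex body $X$ with origin in its interior and $C^1$-smooth boundary, $f\colon \partial X\to\partial X^\omega$ is the map assigning to $x\in\partial X$ the unique point $f(x)\in X^\omega$ with $\omega(x,f(x))=1$. When $X=X^\omega$, $f$ maps $\partial X$ to itself, and if $\partial X$ is $C^2$ then $f$ is $C^1$. *)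

theory Defs
  imports "HOL-Analysis.Analysis"
begin

text \<open>R^{2n} is modelled as complex^'n (real inner product = sum of Re(z * cnj w)).
  J is componentwise multiplication by the imaginary unit.\<close>

definition J :: "complex ^ 'n \<Rightarrow> complex ^ 'n" where
  "J u = (\<chi> i. \<i> * u $ i)"

definition omega :: "complex ^ 'n \<Rightarrow> complex ^ 'n \<Rightarrow> real" where
  "omega u v = inner (J u) v"

definition symp_polar :: "(complex ^ 'n) set \<Rightarrow> (complex ^ 'n) set" where
  "symp_polar X = {y. \<forall>x\<in>X. omega x y \<le> 1}"

definition convex_body :: "(complex ^ 'n) set \<Rightarrow> bool" where
  "convex_body X \<longleftrightarrow> convex X \<and> compact X \<and> interior X \<noteq> {}"

definition symp_map :: "(complex ^ 'n) set \<Rightarrow> complex ^ 'n \<Rightarrow> complex ^ 'n" where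
  "symp_map X x = (THE y. y \<in> symp_polar X \<and> omega x y = 1)"

definition local_defining_fn ::
  "(complex ^ 'n) set \<Rightarrow> complex ^ 'n \<Rightarrow> (complex ^ 'n) set \<Rightarrow> (complex ^ 'n \<Rightarrow> real)
   \<Rightarrow> (complex ^ 'n \<Rightarrow> ((complex ^ 'n) \<Rightarrow>\<^sub>L real))
   \<Rightarrow> (complex ^ 'n \<Rightarrow> ((complex ^ 'n) \<Rightarrow>\<^sub>L ((complex ^ 'n) \<Rightarrow>\<^sub>L real))) \<Rightarrow> bool" where
  "local_defining_fn X p U \<rho> D D2 \<longleftrightarrow>
     open U \<and> p \<in> U \<and>
     (\<forall>x\<in>U. (\<rho> has_derivative blinfun_apply (D x)) (at x)) \<and>
     (\<forall>x\<in>U. (D has_derivative blinfun_apply (D2 x)) (at x)) \<and>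
     continuous_on U D2 \<and>
     D p \<noteq> 0 \<and>
     X \<inter> U = {x\<in>U. \<rho> x \<le> 0}"

definition C2_boundary :: "(complex ^ 'n) set \<Rightarrow> bool" where
  "C2_boundary X \<longleftrightarrow> (\<forall>p\<in>frontier X. \<exists>U \<rho> D D2. local_defining_fn X p U \<rho> D D2)"

text \<open>Positive curvature (positive definite second fundamental form) at p: for any local
  defining function, its Hessian is positive definite on the tangent space ker D p.
  (II = Hess rho / |grad rho| restricted to the tangent space.)\<close>
definition positively_curved_at :: "(complex ^ 'n) set \<Rightarrow> complex ^ 'n \<Rightarrow> bool" where
  "positively_curved_at X p \<longleftrightarrow>
     (\<forall>U \<rho> D D2. local_defining_fn X p U \<rho> D D2 \<longrightarrow>
        (\<forall>\<xi>. \<xi> \<noteq> 0 \<and> D p \<xi> = 0 \<longrightarrow> D2 p \<xi> \<xi> > 0))"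

end

theory Submission
  imports Defs
begin


lemma inner_cvec: "inner (x::complex^'n) y = (\<Sum>i\<in>UNIV. inner (x$i) (y$i))"
  by (simp add: inner_vec_def)

lemma J_add: "J (u + v) = J u + J v" by (simp add: J_def vec_eq_iff algebra_simps)
lemma J_scale: "J (a *\<^sub>R u) = a *\<^sub>R J u" by (simp add: J_def vec_eq_iff scaleR_conv_of_real)
lemma J_J: "J (J u) = - u" by (simp add: J_def vec_eq_iff)
lemma linear_J: "linear J" by (simp add: linearI J_add J_scale)
lemma inner_JJ: "inner (J u) (J v) = inner u v"
  by (simp add: inner_cvec J_def inner_complex_def add.commute)
lemma inner_J_left: "inner (J u) v = - inner u (J v)"
  by (simp add: inner_cvec J_def inner_complex_def sum_negf[symmetric])
lemma norm_J: "norm (J u) = norm u"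
  by (simp add: norm_eq_sqrt_inner inner_JJ)
lemma omega_antisym: "omega u v = - omega v u"
  using inner_J_left[of v u] by (simp add: omega_def inner_commute)
lemma omega_self: "omega u u = 0"
  using omega_antisym[of u u] by simp
lemma omega_add1: "omega (a + b) c = omega a c + omega b c" by (simp add: omega_def J_add inner_add_left)
lemma omega_add2: "omega c (a + b) = omega c a + omega c b" by (simp add: omega_def inner_add_right)
lemma omega_diff1: "omega (a - b) c = omega a c - omega b c"
  using omega_add1[of "a-b" b c] by simp
lemma omega_diff2: "omega c (a - b) = omega c a - omega c b" by (simp add: omega_def inner_diff_right)
lemma omega_scale1: "omega (s *\<^sub>R a) c = s * omega a c" by (simp add: omega_def J_scale)
lemma omega_scale2: "omega c (s *\<^sub>R a) = s * omega c a" by (simp add: omega_def)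
lemma omega_bound: "\<bar>omega u v\<bar> \<le> norm u * norm v"
  unfolding omega_def using Cauchy_Schwarz_ineq2[of "J u" v] by (simp add: norm_J)
lemma omega_J2: "omega u (J u) = norm u ^ 2"
  by (simp add: omega_def inner_JJ power2_norm_eq_inner)
lemma bounded_bilinear_omega: "bounded_bilinear omega"
  unfolding omega_def
  by (rule bounded_bilinear.comp1[OF bounded_bilinear_inner]) (rule bounded_linear_intro[where K=1], simp_all add: J_add J_scale norm_J)
lemma bounded_linear_omega2: "bounded_linear (omega c)"
  unfolding omega_def by (rule bounded_linear_inner_right)



lemma vd_quot:
  fixes g :: "real \<Rightarrow> 'a::real_normed_vector"
  assumes "(g has_vector_derivative v) (at 0)"
  shows "((\<lambda>t. (1/t) *\<^sub>R (g t - g 0)) \<longlongrightarrow> v) (at 0)"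
proof -
  have "((\<lambda>h. norm (g (0 + h) - g 0 - h *\<^sub>R v) / norm h) \<longlongrightarrow> 0) (at 0)"
    using assms unfolding has_vector_derivative_def has_derivative_at by simp
  then have "((\<lambda>h. norm ((1/h) *\<^sub>R (g h - g 0) - v)) \<longlongrightarrow> 0) (at 0)"
  proof (rule Lim_transform_eventually)
    show "\<forall>\<^sub>F h in at 0. norm (g (0 + h) - g 0 - h *\<^sub>R v) / norm h = norm ((1/h) *\<^sub>R (g h - g 0) - v)"
      unfolding eventually_at_filter
    proof (intro always_eventually allI impI)
      fix h :: real assume "h \<noteq> 0"
      then have "(1/h) *\<^sub>R (g h - g 0) - v = (1/h) *\<^sub>R (g h - g 0 - h *\<^sub>R v)"
        by (simp add: algebra_simps)
      then show "norm (g (0 + h) - g 0 - h *\<^sub>R v) / norm h = norm ((1/h) *\<^sub>R (g h - g 0) - v)"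
        by (simp add: divide_inverse mult.commute)
    qed
  qed
  then show ?thesis by (simp add: tendsto_norm_zero_iff LIM_zero_iff)
qed




context
  fixes X :: "(complex ^ 'n) set"
  assumes cb: "convex_body X" and z0: "0 \<in> interior X" and sp: "symp_polar X = X"
begin

lemma cpt: "compact X" using cb by (simp add: convex_body_def)
lemma cvx: "convex X" using cb by (simp add: convex_body_def)
lemma clo: "closed X" using cpt compact_imp_closed by blast
lemma fr_sub: "frontier X \<subseteq> X" using clo frontier_subset_closed by blast
lemma fr_nz: "x \<in> frontier X \<Longrightarrow> x \<noteq> 0"
  using z0 unfolding frontier_def by blast
lemma polar_mem: "y \<in> X \<longleftrightarrow> (\<forall>x\<in>X. omega x y \<le> 1)"
proof -
  have "y \<in> symp_polar X \<longleftrightarrow> (\<forall>x\<in>X. omega x y \<le> 1)" unfolding symp_polar_def by simp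
  then show ?thesis using sp by simp
qed

lemma om_le1: "x \<in> X \<Longrightarrow> y \<in> X \<Longrightarrow> omega x y \<le> 1"
  using polar_mem by blast

lemma ex_q:
  assumes p: "p \<in> frontier X"
  shows "\<exists>q\<in>X. omega q p = 1"
proof -
  have pX: "p \<in> X" using p fr_sub by blast
  have "(\<lambda>b. omega b p) = (\<lambda>b. - inner (J p) b)"
    using omega_antisym[of _ p] by (auto simp: omega_def)
  then have "continuous_on X (\<lambda>b. omega b p)"
    by (simp only:) (intro continuous_intros)
  then obtain q where qX: "q \<in> X" and qmax: "\<forall>b\<in>X. omega b p \<le> omega q p"
    using continuous_attains_sup[OF cpt] pX by blast
  have le: "omega q p \<le> 1" using om_le1 qX pX by blast
  obtain R where R: "R > 0" "\<forall>b\<in>X. norm b \<le> R"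
    using compact_imp_bounded[OF cpt] bounded_pos by blast
  have "omega q p = 1"
  proof (rule ccontr)
    assume "omega q p \<noteq> 1"
    then have s: "omega q p < 1" using le by simp
    define \<epsilon> where "\<epsilon> = (1 - omega q p) / R"
    have e: "\<epsilon> > 0" using s R by (simp add: \<epsilon>_def)
    have "ball p \<epsilon> \<subseteq> X"
    proof
      fix p' assume "p' \<in> ball p \<epsilon>"
      then have d: "norm (p' - p) < \<epsilon>" by (simp add: dist_norm norm_minus_commute)
      have "\<forall>b\<in>X. omega b p' \<le> 1"
      proof
        fix b assume bX: "b \<in> X"
        have "omega b p' = omega b p + omega b (p' - p)" by (simp add: omega_diff2)
        also have "\<dots> \<le> omega q p + norm b * norm (p' - p)"
          using qmax bX omega_bound[of b "p' - p"] by auto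
        also have "\<dots> \<le> omega q p + R * \<epsilon>"
          using R bX d by (intro add_left_mono mult_mono) auto
        also have "\<dots> = 1" using R by (simp add: \<epsilon>_def)
        finally show "omega b p' \<le> 1" .
      qed
      then show "p' \<in> X" using polar_mem by blast
    qed
    then have "p \<in> interior X" using e mem_interior by blast
    then show False using p by (simp add: frontier_def)
  qed
  then show ?thesis using qX by blast
qed

lemma q_frontier:
  assumes qX: "q \<in> X" and pX: "p \<in> X" and pnz: "p \<noteq> 0" and eq: "omega q p = 1"
  shows "q \<in> frontier X"
proof (rule ccontr)
  assume "q \<notin> frontier X"
  then have "q \<in> interior X" using qX clo by (simp add: frontier_def closure_closed)
  then obtain \<epsilon> where e: "\<epsilon> > 0" "ball q \<epsilon> \<subseteq> X" using open_contains_ball by (meson interior_subset mem_interior)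
  define d where "d = \<epsilon> / (2 * norm p)"
  have d: "d > 0" using e pnz by (simp add: d_def)
  define q' where "q' = q - d *\<^sub>R J p"
  have "dist q q' < \<epsilon>" using e pnz by (simp add: q'_def dist_norm norm_J d_def)
  then have "q' \<in> X" using e by auto
  moreover have "omega q' p = 1 + d * norm p ^ 2"
    using eq by (simp add: q'_def omega_diff1 omega_scale1 omega_antisym[of "J p" p] omega_J2)
  moreover have "d * norm p ^ 2 > 0" using d pnz by simp
  ultimately show False using om_le1[OF _ pX, of q'] by linarith
qed

lemma m_frontier:
  assumes mX: "m \<in> X" and xX: "x \<in> X" and xnz: "x \<noteq> 0" and eq: "omega x m = 1"
  shows "m \<in> frontier X"
proof (rule ccontr)
  assume "m \<notin> frontier X"
  then have "m \<in> interior X" using mX clo by (simp add: frontier_def closure_closed)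
  then obtain \<epsilon> where e: "\<epsilon> > 0" "ball m \<epsilon> \<subseteq> X" using open_contains_ball by (meson interior_subset mem_interior)
  define d where "d = \<epsilon> / (2 * norm x)"
  have d: "d > 0" using e xnz by (simp add: d_def)
  define m' where "m' = m + d *\<^sub>R J x"
  have "dist m m' < \<epsilon>" using e xnz by (simp add: m'_def dist_norm norm_J d_def)
  then have "m' \<in> X" using e by auto
  moreover have "omega x m' = 1 + d * norm x ^ 2"
    using eq by (simp add: m'_def omega_add2 omega_scale2 omega_J2)
  moreover have "d * norm x ^ 2 > 0" using d xnz by simp
  ultimately show False using om_le1[OF xX, of m'] by linarith
qed

lemma K_contain:
  assumes ball: "cball c r \<subseteq> X" and r: "r \<ge> 0" and zX: "z \<in> X"
  shows "omega c z + r * norm z \<le> 1"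
proof (cases "z = 0")
  case True then show ?thesis by (simp add: omega_def)
next
  case False
  define b where "b = c - (r / norm z) *\<^sub>R J z"
  have "dist c b = r" using False r by (simp add: b_def dist_norm norm_J)
  then have "b \<in> X" using ball by auto
  moreover have "omega b z = omega c z + r * norm z"
    using False by (simp add: b_def omega_diff1 omega_scale1 omega_antisym[of "J z" z] omega_J2 power2_eq_square)
  ultimately show ?thesis using om_le1 zX by metis
qed

lemma ball_bound:
  assumes "b \<in> cball c r"
  shows "omega b x \<le> omega c x + r * norm x"
proof -
  have "omega b x = omega c x + omega (b - c) x" by (simp add: omega_diff1)
  also have "\<dots> \<le> omega c x + norm (b - c) * norm x" using omega_bound[of "b-c" x] by simp
  also have "\<dots> \<le> omega c x + r * norm x"
    using assms by (intro add_left_mono mult_right_mono) (auto simp: dist_norm norm_minus_commute)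
  finally show ?thesis .
qed

end



lemma ldf_unfold:
  assumes "local_defining_fn X p U \<rho> D D2"
  shows "open U" "p \<in> U" "\<And>x. x\<in>U \<Longrightarrow> (\<rho> has_derivative blinfun_apply (D x)) (at x)"
    "\<And>x. x\<in>U \<Longrightarrow> (D has_derivative blinfun_apply (D2 x)) (at x)"
    "continuous_on U D2" "D p \<noteq> 0" "X \<inter> U = {x\<in>U. \<rho> x \<le> 0}"
  using assms unfolding local_defining_fn_def by auto

lemma ldf_mem:
  assumes "local_defining_fn X p U \<rho> D D2" "y \<in> U"
  shows "y \<in> X \<longleftrightarrow> \<rho> y \<le> 0"
proof -
  have "X \<inter> U = {x\<in>U. \<rho> x \<le> 0}" using ldf_unfold(7)[OF assms(1)] .
  then have "y \<in> X \<inter> U \<longleftrightarrow> y \<in> {x\<in>U. \<rho> x \<le> 0}" by simp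
  then show ?thesis using assms(2) by simp
qed

lemma rho_zero:
  assumes cl: "closed X" and p: "p \<in> frontier X" and L: "local_defining_fn X p U \<rho> D D2"
  shows "\<rho> p = 0"
proof (rule ccontr)
  note l = ldf_unfold[OF L]
  have pX: "p \<in> X" using p cl frontier_subset_closed by blast
  have le: "\<rho> p \<le> 0" using pX ldf_mem[OF L l(2)] by simp
  assume "\<rho> p \<noteq> 0"
  then have lt: "\<rho> p < 0" using le by simp
  have "continuous (at p) \<rho>" using l(3)[OF l(2)] has_derivative_continuous by blast
  then obtain d1 where d1: "d1 > 0" "\<forall>x'. dist x' p < d1 \<longrightarrow> dist (\<rho> x') (\<rho> p) < - \<rho> p"
  proof -
    have "- \<rho> p > 0" using lt by simp
    then show ?thesis using \<open>continuous (at p) \<rho>\<close> unfolding continuous_at_eps_delta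
      using that by blast
  qed
  obtain d2 where d2: "d2 > 0" "ball p d2 \<subseteq> U" using l(1,2) open_contains_ball by blast
  have "ball p (min d1 d2) \<subseteq> X"
  proof
    fix y assume y: "y \<in> ball p (min d1 d2)"
    then have "y \<in> ball p d2" by simp
    then have "y \<in> U" using d2 by blast
    moreover have "dist y p < d1" using y by (simp add: dist_commute)
    then have "dist (\<rho> y) (\<rho> p) < - \<rho> p" using d1 by blast
    then have "\<rho> y < 0" by (simp add: dist_real_def)
    ultimately show "y \<in> X" using ldf_mem[OF L] by auto
  qed
  then have "p \<in> interior X" using d1 d2 mem_interior[of p X]
    by (metis min_less_iff_conj)
  then show False using p by (simp add: frontier_def)
qed

lemma gradient_ex:
  fixes f :: "'a::euclidean_space \<Rightarrow> real"
  assumes "linear f"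
  shows "\<exists>g. \<forall>y. f y = inner g y"
proof (intro exI allI)
  fix y
  have "f y = f (\<Sum>b\<in>Basis. (y \<bullet> b) *\<^sub>R b)" by (simp add: euclidean_representation)
  also have "\<dots> = (\<Sum>b\<in>Basis. (y \<bullet> b) * f b)"
    using assms by (simp add: linear_sum linear_scale)
  also have "\<dots> = inner (\<Sum>b\<in>Basis. f b *\<^sub>R b) y"
    by (simp add: inner_sum_left inner_sum_right inner_commute mult.commute)
  finally show "f y = inner (\<Sum>b\<in>Basis. f b *\<^sub>R b) y" .
qed




lemma taylor_upper:
  assumes L: "local_defining_fn X q U \<rho> D D2"
  shows "\<exists>\<delta> M. \<delta> > 0 \<and> M > 0 \<and> cball q \<delta> \<subseteq> U \<and>
           (\<forall>y\<in>cball q \<delta>. \<rho> y \<le> \<rho> q + D q (y - q) + M * norm (y - q)^2)"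
proof -
  note l = ldf_unfold[OF L]
  define M where "M = norm (D2 q) + 1"
  have M: "M > 0" by (simp add: M_def add_nonneg_pos)
  have "isCont D2 q" using l(1,2,5) continuous_on_eq_continuous_at by blast
  then obtain d1 where d1: "d1 > 0" "\<forall>x'. dist x' q < d1 \<longrightarrow> dist (D2 x') (D2 q) < 1"
    unfolding continuous_at_eps_delta by (meson zero_less_one)
  obtain d2 where d2: "d2 > 0" "ball q d2 \<subseteq> U" using l(1,2) open_contains_ball by blast
  define \<delta> where "\<delta> = min d1 d2 / 2"
  have \<delta>: "\<delta> > 0" using d1 d2 by (simp add: \<delta>_def)
  have sub: "cball q \<delta> \<subseteq> ball q d1 \<inter> ball q d2"
    using d1 d2 by (auto simp: \<delta>_def)
  have cU: "cball q \<delta> \<subseteq> U" using sub d2 by blast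
  have nD2: "norm (D2 x) \<le> M" if "x \<in> cball q \<delta>" for x
  proof -
    have "dist x q < d1" using sub that by (auto simp: dist_commute)
    then have "dist (D2 x) (D2 q) < 1" using d1 by blast
    then have "norm (D2 x - D2 q) < 1" by (simp add: dist_norm)
    then show ?thesis unfolding M_def using norm_triangle_ineq2[of "D2 x" "D2 q"] by linarith
  qed
  have mv1: "norm (D x - D q) \<le> M * norm (x - q)" if "x \<in> cball q \<delta>" for x
  proof -
    have "norm (D x - D q) \<le> M * norm (x - q)"
    proof (rule differentiable_bound[of "cball q \<delta>" D "\<lambda>x. blinfun_apply (D2 x)" M x q])
      show "convex (cball q \<delta>)" by simp
      show "(D has_derivative blinfun_apply (D2 z)) (at z within cball q \<delta>)" if "z \<in> cball q \<delta>" for z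
        using l(4) cU that has_derivative_at_withinI by blast
      show "onorm (blinfun_apply (D2 z)) \<le> M" if "z \<in> cball q \<delta>" for z
        using nD2[OF that] by (simp add: norm_blinfun.rep_eq)
      show "x \<in> cball q \<delta>" by fact
      show "q \<in> cball q \<delta>" using \<delta> by simp
    qed
    then show ?thesis .
  qed
  have "\<rho> y \<le> \<rho> q + D q (y - q) + M * norm (y - q)^2" if y: "y \<in> cball q \<delta>" for y
  proof -
    define h where "h x = \<rho> x - D q x" for x
    have segc: "closed_segment q y \<subseteq> cball q \<delta>"
      using y \<delta> by (simp add: closed_segment_subset)
    have "norm (h y - h q) \<le> (M * norm (y - q)) * norm (y - q)"
    proof (rule differentiable_bound[of "closed_segment q y" h "\<lambda>x. blinfun_apply (D x - D q)"])
      show "convex (closed_segment q y)" by simp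
      show "(h has_derivative blinfun_apply (D z - D q)) (at z within closed_segment q y)"
        if "z \<in> closed_segment q y" for z
      proof -
        have zU: "z \<in> U" using that segc cU by blast
        have "((\<lambda>x. \<rho> x - D q x) has_derivative (\<lambda>v. D z v - D q v)) (at z)"
          by (intro has_derivative_diff l(3)[OF zU] bounded_linear_imp_has_derivative
              blinfun.bounded_linear_right)
        moreover have "blinfun_apply (D z - D q) = (\<lambda>v. D z v - D q v)"
          by (rule ext) (simp add: blinfun.diff_left)
        ultimately have "(h has_derivative blinfun_apply (D z - D q)) (at z)"
          unfolding h_def by simp
        then show ?thesis using has_derivative_at_withinI by blast
      qed
      show "onorm (blinfun_apply (D z - D q)) \<le> M * norm (y - q)"
        if "z \<in> closed_segment q y" for z
      proof -
        have "onorm (blinfun_apply (D z - D q)) = norm (D z - D q)" by (simp add: norm_blinfun.rep_eq)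
        also have "\<dots> \<le> M * norm (z - q)" using mv1 that segc by blast
        also have "\<dots> \<le> M * norm (y - q)" using segment_bound1[OF that] M by simp
        finally show ?thesis .
      qed
      show "y \<in> closed_segment q y" by simp
      show "q \<in> closed_segment q y" by simp
    qed
    moreover have "h y - h q = \<rho> y - \<rho> q - D q (y - q)"
      by (simp add: h_def blinfun.diff_right)
    ultimately have "\<rho> y - \<rho> q - D q (y - q) \<le> M * norm (y - q) ^ 2"
      by (simp add: power2_eq_square mult.assoc)
    then show ?thesis by simp
  qed
  then show ?thesis using \<delta> M cU by blast
qed


lemma inner_ball:
  assumes cl: "closed X" and q: "q \<in> frontier X" and L: "local_defining_fn X q U \<rho> D D2"
  shows "\<exists>c r. r > 0 \<and> cball c r \<subseteq> X \<and> q \<in> cball c r"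
proof -
  note l = ldf_unfold[OF L]
  have rq: "\<rho> q = 0" using rho_zero[OF cl q L] .
  obtain \<delta> M where dM: "\<delta> > 0" "M > 0" "cball q \<delta> \<subseteq> U"
    and T: "\<forall>y\<in>cball q \<delta>. \<rho> y \<le> \<rho> q + D q (y - q) + M * norm (y - q)^2"
    using taylor_upper[OF L] by blast
  obtain G where G: "\<forall>y. D q y = inner G y"
    using gradient_ex[of "blinfun_apply (D q)"] blinfun.bounded_linear_right bounded_linear.linear by blast
  have Gnz: "G \<noteq> 0"
  proof
    assume "G = 0"
    then have "D q = 0" using G by (intro blinfun_eqI) simp
    then show False using l(6) by simp
  qed
  define g where "g = norm G"
  have g: "g > 0" using Gnz by (simp add: g_def)
  define n where "n = (1 / g) *\<^sub>R G"
  have n: "norm n = 1" using g by (simp add: n_def g_def)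
  have Gn: "inner G v = g * inner n v" for v using g by (simp add: n_def)
  define r where "r = min (\<delta> / 2) (g / (2 * M))"
  have r: "r > 0" using dM g by (simp add: r_def)
  have r1: "2 * r \<le> \<delta>" by (simp add: r_def)
  have r2: "2 * M * r \<le> g"
  proof -
    have "r \<le> g / (2 * M)" by (simp add: r_def)
    then have "2 * M * r \<le> 2 * M * (g / (2 * M))" using dM by (intro mult_left_mono) auto
    also have "\<dots> = g" using dM by simp
    finally show ?thesis .
  qed
  define c where "c = q - r *\<^sub>R n"
  have "cball c r \<subseteq> X"
  proof
    fix y assume y: "y \<in> cball c r"
    then have ny: "norm (y - c) \<le> r" by (simp add: dist_norm norm_minus_commute)
    have yc: "y - c = (y - q) + r *\<^sub>R n" by (simp add: c_def)
    have "norm (y - q) \<le> norm (y - c) + norm (r *\<^sub>R n)"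
      using norm_triangle_ineq4[of "y - c" "r *\<^sub>R n"] yc by (simp add: algebra_simps)
    then have nyq: "norm (y - q) \<le> 2 * r" using ny n r by simp
    have nyc: "norm (y - c)^2 = norm (y - q)^2 + 2 * r * inner n (y - q) + r^2"
    proof -
      have nn: "inner n n = 1" using n by (simp add: norm_eq_sqrt_inner)
      have "norm (y - c)^2 = inner ((y - q) + r *\<^sub>R n) ((y - q) + r *\<^sub>R n)"
        unfolding yc by (simp only: power2_norm_eq_inner)
      also have "\<dots> = inner (y - q) (y - q) + 2 * r * inner n (y - q) + r^2 * inner n n"
      proof -
        have "inner ((y - q) + r *\<^sub>R n) ((y - q) + r *\<^sub>R n) =
          inner (y - q) (y - q) + inner (y - q) (r *\<^sub>R n) + inner (r *\<^sub>R n) (y - q) + inner (r *\<^sub>R n) (r *\<^sub>R n)"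
          by (simp only: inner_add_left inner_add_right add.assoc)
        moreover have "inner (y - q) (r *\<^sub>R n) = r * inner n (y - q)" by (simp add: inner_commute)
        moreover have "inner (r *\<^sub>R n) (y - q) = r * inner n (y - q)" by simp
        moreover have "inner (r *\<^sub>R n) (r *\<^sub>R n) = r^2 * inner n n" by (simp add: power2_eq_square)
        ultimately show ?thesis by (simp only:)
      qed
      finally show ?thesis using nn by (simp add: power2_norm_eq_inner)
    qed
    then have ineq: "2 * r * inner n (y - q) \<le> - (norm (y - q)^2)"
    proof -
      have "norm (y - c)^2 \<le> r^2" using ny by (intro power_mono) auto
      then show ?thesis using nyc by linarith
    qed
    have yd: "y \<in> cball q \<delta>" using nyq r1 by (simp add: dist_norm norm_minus_commute)
    then have yU: "y \<in> U" using dM by blast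
    have "\<rho> y \<le> g * inner n (y - q) + M * norm (y - q)^2"
      using T yd rq G Gn by simp
    also have "\<dots> \<le> 0"
    proof -
      have "2 * r * (g * inner n (y - q)) \<le> - g * norm (y - q)^2"
      proof -
        have "g * (2 * r * inner n (y - q)) \<le> g * (- (norm (y - q)^2))"
          using ineq g by (intro mult_left_mono) auto
        then show ?thesis by (simp add: algebra_simps)
      qed
      moreover have "2 * r * (M * norm (y - q)^2) \<le> g * norm (y - q)^2"
      proof -
        have "2 * M * r * norm (y - q)^2 \<le> g * norm (y - q)^2"
          by (rule mult_right_mono[OF r2]) simp
        then show ?thesis by (simp add: ac_simps)
      qed
      ultimately have "2 * r * (g * inner n (y - q) + M * norm (y - q)^2) \<le> 0"
        by (simp add: distrib_left)
      then show ?thesis using r by (simp add: mult_le_0_iff)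
    qed
    finally show "y \<in> X" using ldf_mem[OF L yU] by simp
  qed
  moreover have "q \<in> cball c r" using r n by (simp add: c_def dist_norm)
  ultimately show ?thesis using r by blast
qed


lemma line_deriv:
  assumes "(\<rho> has_derivative blinfun_apply Dx) (at x)"
  shows "((\<lambda>t. \<rho> (x + t *\<^sub>R v)) has_real_derivative Dx v) (at 0)"
proof -
  have l: "((\<lambda>t::real. x + t *\<^sub>R v) has_derivative (\<lambda>t. t *\<^sub>R v)) (at 0)"
    by (auto intro!: derivative_eq_intros)
  have "((\<lambda>t. \<rho> (x + t *\<^sub>R v)) has_derivative (\<lambda>t. Dx (t *\<^sub>R v))) (at 0)"
    using has_derivative_compose[OF l, of \<rho> "blinfun_apply Dx"] assms by simp
  then show ?thesis
    by (simp add: has_field_derivative_def blinfun.scaleR_right mult.commute[of _ "Dx v"])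
qed

lemma normal_unique:
  assumes cl: "closed X" and x: "x \<in> frontier X" and L: "local_defining_fn X x U \<rho> D D2"
    and lin: "linear Lf" and sup: "\<forall>z\<in>X. Lf z \<le> 1" and Lx: "Lf x = 1"
  shows "\<exists>k>0. \<forall>v. Lf v = k * D x v"
proof -
  note l = ldf_unfold[OF L]
  have rx: "\<rho> x = 0" using rho_zero[OF cl x L] .
  have stepa: "Lf v \<le> 0" if v: "D x v < 0" for v
  proof -
    have "((\<lambda>t. \<rho> (x + t *\<^sub>R v)) has_real_derivative D x v) (at 0)"
      using line_deriv l(3)[OF l(2)] by blast
    from DERIV_neg_dec_right[OF this v] obtain d where d: "d > 0"
      "\<forall>h>0. h < d \<longrightarrow> \<rho> (x + 0 *\<^sub>R v) > \<rho> (x + (0 + h) *\<^sub>R v)" by blast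
    obtain \<epsilon> where e: "\<epsilon> > 0" "ball x \<epsilon> \<subseteq> U" using l(1,2) open_contains_ball by blast
    define m where "m = min d (\<epsilon> / (norm v + 1))"
    define h where "h = m / 2"
    have "\<epsilon> / (norm v + 1) > 0" using e by (simp add: add_nonneg_pos)
    then have m0: "m > 0" using d by (simp add: m_def)
    have m1: "m \<le> d" "m \<le> \<epsilon> / (norm v + 1)" by (simp_all add: m_def)
    have h: "h > 0" "h < d" using m0 m1 by (simp_all add: h_def)
    have "h \<le> \<epsilon> / (norm v + 1) / 2" unfolding h_def by (rule divide_right_mono[OF m1(2)]) simp
    then have "h * (norm v + 1) \<le> \<epsilon> / (norm v + 1) / 2 * (norm v + 1)"
      by (intro mult_right_mono) auto
    also have "\<dots> = \<epsilon> / 2"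
    proof -
      have "norm v + 1 > 0" by (simp add: add_nonneg_pos)
      then have "norm v + 1 \<noteq> 0" by simp
      then show ?thesis by (simp add: field_simps)
    qed
    finally have hh: "h * norm v + h \<le> \<epsilon> / 2" by (simp add: algebra_simps)
    have "norm (h *\<^sub>R v) = h * norm v" using h by simp
    then have "norm (h *\<^sub>R v) < \<epsilon>" using hh h e by linarith
    then have "x + h *\<^sub>R v \<in> U" using e by (simp add: dist_norm subset_iff)
    moreover have "\<rho> (x + h *\<^sub>R v) < 0" using d h rx by simp
    ultimately have "x + h *\<^sub>R v \<in> X" using ldf_mem[OF L] by simp
    then have "Lf (x + h *\<^sub>R v) \<le> 1" using sup by blast
    then have "h * Lf v \<le> 0" using Lx lin by (simp add: linear_add linear_scale)
    then show ?thesis using h by (simp add: mult_le_0_iff)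
  qed
  obtain w where w: "D x w \<noteq> 0"
  proof -
    have "\<exists>w. D x w \<noteq> 0"
    proof (rule ccontr)
      assume "\<not> (\<exists>w. D x w \<noteq> 0)"
      then have "D x = 0" by (intro blinfun_eqI) simp
      then show False using l(6) by simp
    qed
    then show ?thesis using that by blast
  qed
  define \<eta> where "\<eta> = (-1 / D x w) *\<^sub>R w"
  have Deta: "D x \<eta> = -1" using w by (simp add: \<eta>_def blinfun.scaleR_right blinfun.minus_right)
  have Leta: "Lf \<eta> \<le> 0" using stepa Deta by simp
  have kerpos: "Lf u \<le> 0" if u: "D x u = 0" for u
  proof (rule ccontr)
    assume "\<not> Lf u \<le> 0"
    then have pos: "Lf u > 0" by simp
    define \<epsilon> where "\<epsilon> = Lf u / (2 * (\<bar>Lf \<eta>\<bar> + 1))"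
    have e: "\<epsilon> > 0" using pos by (simp add: \<epsilon>_def)
    have "D x (u + \<epsilon> *\<^sub>R \<eta>) = - \<epsilon>" using u Deta by (simp add: blinfun.add_right blinfun.scaleR_right)
    then have "Lf (u + \<epsilon> *\<^sub>R \<eta>) \<le> 0" using stepa e by simp
    then have A: "Lf u + \<epsilon> * Lf \<eta> \<le> 0" using lin by (simp add: linear_add linear_scale)
    have "\<bar>Lf \<eta>\<bar> + 1 \<noteq> 0" by linarith
    then have "\<epsilon> * (\<bar>Lf \<eta>\<bar> + 1) = Lf u / 2" by (simp add: \<epsilon>_def field_simps)
    then have "\<epsilon> * \<bar>Lf \<eta>\<bar> < Lf u" using e pos by (simp add: algebra_simps)
    moreover have "\<epsilon> * (- \<bar>Lf \<eta>\<bar>) \<le> \<epsilon> * Lf \<eta>" using e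
      by (intro mult_left_mono) auto
    ultimately show False using A by linarith
  qed
  have ker: "Lf u = 0" if u: "D x u = 0" for u
  proof -
    have "D x (-u) = 0" using u by (simp add: blinfun.minus_right)
    then have "Lf (-u) \<le> 0" using kerpos by blast
    then have "- Lf u \<le> 0" using lin by (simp add: linear_neg)
    then show ?thesis using kerpos[OF u] by simp
  qed
  have rep: "Lf v = (- Lf \<eta>) * D x v" for v
  proof -
    have "D x (v + (D x v) *\<^sub>R \<eta>) = 0" using Deta by (simp add: blinfun.add_right blinfun.scaleR_right)
    then have "Lf (v + (D x v) *\<^sub>R \<eta>) = 0" using ker by blast
    then show ?thesis using lin by (simp add: linear_add linear_scale algebra_simps)
  qed
  have "- Lf \<eta> \<noteq> 0" using rep[of x] Lx by auto
  then have "- Lf \<eta> > 0" using Leta by simp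
  then show ?thesis using rep by blast
qed




definition Pr :: "complex^'n \<Rightarrow> complex^'n \<Rightarrow> complex^'n" where
  "Pr x z = z - (inner x z / (norm x)^2) *\<^sub>R x"

lemma Pr_linear: "linear (Pr x)"
  unfolding Pr_def by (intro linearI) (simp_all add: inner_add_right algebra_simps add_divide_distrib scaleR_add_left)

lemma Pr_self: "x \<noteq> 0 \<Longrightarrow> Pr x x = 0"
  by (simp add: Pr_def power2_norm_eq_inner)

lemma Pr_norm: 
  assumes "x \<noteq> 0"
  shows "norm (Pr x z)^2 = norm z ^2 - (inner x z / norm x)^2"
proof -
  define t where "t = inner x z / (norm x)^2"
  have "norm (Pr x z)^2 = inner (z - t *\<^sub>R x) (z - t *\<^sub>R x)"
    by (simp only: Pr_def t_def power2_norm_eq_inner)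
  also have "\<dots> = inner z z - 2 * t * inner x z + t^2 * inner x x"
    by (simp add: inner_diff_left inner_diff_right inner_commute power2_eq_square algebra_simps)
  also have "\<dots> = norm z ^2 - (inner x z / norm x)^2"
    using assms by (simp add: t_def power2_norm_eq_inner[symmetric] power_divide field_simps power2_eq_square)
  finally show ?thesis .
qed

lemma key_ineq:
  fixes x z :: "complex^'n"
  assumes x: "x \<noteq> 0" and r: "r \<ge> 0"
  shows "r * norm (Pr x z)^2 / (2 * norm z) \<le> r * (norm z - inner x z / norm x)"
proof (cases "z = 0")
  case True then show ?thesis by simp
next
  case False
  define a where "a = inner x z / norm x"
  have az: "\<bar>a\<bar> \<le> norm z"
    using Cauchy_Schwarz_ineq2[of x z] x by (simp add: a_def abs_div divide_le_eq mult.commute)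
  have nz: "norm z > 0" using False by simp
  have "(norm z - a) * (norm z + a) \<le> (norm z - a) * (2 * norm z)"
    using az by (intro mult_left_mono) auto
  moreover have "(norm z - a) * (norm z + a) = norm z ^2 - a^2" by (simp add: power2_eq_square algebra_simps)
  ultimately have "norm z ^2 - a^2 \<le> (norm z - a) * (2 * norm z)" by simp
  then have "(norm z ^2 - a^2) / (2 * norm z) \<le> norm z - a"
    using nz by (simp add: pos_divide_le_eq)
  then have "r * ((norm z ^2 - a^2) / (2 * norm z)) \<le> r * (norm z - a)"
    using r by (intro mult_left_mono) auto
  then show ?thesis using Pr_norm[OF x, of z] by (simp add: a_def)
qed




context
  fixes X :: "(complex ^ 'n) set"
  assumes cb: "convex_body X" and z0: "0 \<in> interior X" and sp: "symp_polar X = X"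
    and c2: "C2_boundary X"
begin

lemma supp_struct:
  assumes x: "x \<in> frontier X"
  shows "\<exists>c r. r > 0 \<and> (\<forall>z\<in>X. omega c z + r * norm z \<le> 1) \<and> omega c x + r * norm x = 1"
proof -
  have xX: "x \<in> X" using x fr_sub[OF cb z0 sp] by blast
  have xnz: "x \<noteq> 0" using fr_nz[OF cb z0 sp x] .
  obtain q where qX: "q \<in> X" and qx: "omega q x = 1" using ex_q[OF cb z0 sp x] by blast
  have qf: "q \<in> frontier X" using q_frontier[OF cb z0 sp qX xX xnz qx] .
  obtain U \<rho> D D2 where L: "local_defining_fn X q U \<rho> D D2" using c2 qf unfolding C2_boundary_def by blast
  obtain c r where cr: "r > 0" "cball c r \<subseteq> X" "q \<in> cball c r"
    using inner_ball[OF clo[OF cb z0 sp] qf L] by blast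
  have K: "\<forall>z\<in>X. omega c z + r * norm z \<le> 1"
    using K_contain[OF cb z0 sp cr(2)] cr(1) by auto
  have "1 \<le> omega c x + r * norm x" using ball_bound[OF cb z0 sp cr(3), of x] qx by simp
  then have "omega c x + r * norm x = 1" using K xX by (meson antisym)
  then show ?thesis using cr(1) K by blast
qed

lemma Lg_facts:
  assumes x: "x \<in> frontier X" and r: "r > 0"
    and K: "\<forall>z\<in>X. omega c z + r * norm z \<le> 1" and Kx: "omega c x + r * norm x = 1"
    and Lg_def: "Lg = (\<lambda>z. omega c z + (r / norm x) * inner x z)"
  shows "linear Lg" "\<forall>z\<in>X. Lg z \<le> 1" "Lg x = 1"
    "\<And>z. r * norm (Pr x z)^2 / (2 * norm z) \<le> omega c z + r * norm z - Lg z"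
proof -
  have xnz: "x \<noteq> 0" using fr_nz[OF cb z0 sp x] .
  show "linear Lg" unfolding Lg_def
    by (intro linearI) (simp_all add: omega_add2 omega_scale2 inner_add_right algebra_simps)
  have ki: "r * norm (Pr x z)^2 / (2 * norm z) \<le> omega c z + r * norm z - Lg z" for z
    using key_ineq[OF xnz, of r z] r by (simp add: Lg_def algebra_simps)
  then show "\<And>z. r * norm (Pr x z)^2 / (2 * norm z) \<le> omega c z + r * norm z - Lg z" .
  show "\<forall>z\<in>X. Lg z \<le> 1"
  proof
    fix z assume "z \<in> X"
    moreover have "0 \<le> r * norm (Pr x z)^2 / (2 * norm z)" using r by simp
    ultimately show "Lg z \<le> 1" using ki[of z] K by fastforce
  qed
  show "Lg x = 1" using Kx xnz by (simp add: Lg_def power2_norm_eq_inner[symmetric] power2_eq_square)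
qed


lemma fmap_unique:
  assumes x: "x \<in> frontier X" and y1: "y1 \<in> X" "omega x y1 = 1" and y2: "y2 \<in> X" "omega x y2 = 1"
  shows "y1 = y2"
proof -
  have xX: "x \<in> X" using x fr_sub[OF cb z0 sp] by blast
  have xnz: "x \<noteq> 0" using fr_nz[OF cb z0 sp x] .
  define m where "m = (1/2) *\<^sub>R (y1 + y2)"
  have mX: "m \<in> X" using convexD[OF cvx[OF cb z0 sp] y1(1) y2(1), of "1/2" "1/2"]
    by (simp add: m_def scaleR_add_right)
  have om: "omega x m = 1" using y1 y2 by (simp add: m_def omega_scale2 omega_add2)
  have mf: "m \<in> frontier X" using m_frontier[OF cb z0 sp mX xX xnz om] .
  obtain c r where cr: "r > 0" "\<forall>z\<in>X. omega c z + r * norm z \<le> 1" "omega c m + r * norm m = 1"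
    using supp_struct[OF mf] by blast
  have a1: "omega c y1 + r * norm y1 \<le> 1" using cr(2) y1 by blast
  have a2: "omega c y2 + r * norm y2 \<le> 1" using cr(2) y2 by blast
  have cm: "omega c m = (omega c y1 + omega c y2) / 2" by (simp add: m_def omega_scale2 omega_add2)
  have nm: "norm m = norm (y1 + y2) / 2" by (simp add: m_def)
  have e3: "r * norm (y1 + y2) / 2 + (omega c y1 + omega c y2) / 2 = 1" using cr(3) cm nm by simp
  have e4: "r * norm (y1 + y2) = 2 - omega c y1 - omega c y2" using e3 by (simp add: field_simps)
  have "r * norm y1 + r * norm y2 \<le> r * norm (y1 + y2)"
    unfolding e4 using a1 a2 by linarith
  then have "r * (norm y1 + norm y2) \<le> r * norm (y1 + y2)" by (simp add: distrib_left)
  then have "norm y1 + norm y2 \<le> norm (y1 + y2)" using cr(1) by simp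
  then have "norm (y1 + y2) = norm y1 + norm y2" using norm_triangle_ineq[of y1 y2] by linarith
  then have eq: "norm y1 *\<^sub>R y2 = norm y2 *\<^sub>R y1" using norm_triangle_eq by blast
  then have "omega x (norm y1 *\<^sub>R y2) = omega x (norm y2 *\<^sub>R y1)" by simp
  then have nn: "norm y1 = norm y2" using y1 y2 by (simp add: omega_scale2)
  have "y1 \<noteq> 0" using y1 by (auto simp: omega_def)
  then show ?thesis using eq nn by auto
qed

lemma fmap_exists:
  assumes x: "x \<in> frontier X"
  shows "\<exists>y\<in>X. omega x y = 1"
proof -
  have ri: "rel_interior X = interior X" using z0 rel_interior_nonempty_interior by blast
  have xc: "x \<in> closure X" using x by (simp add: frontier_def)
  have xr: "x \<notin> rel_interior X" using x ri by (simp add: frontier_def)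
  obtain a where a: "a \<noteq> 0" "\<And>y. y \<in> closure X \<Longrightarrow> a \<bullet> x \<le> a \<bullet> y"
    "\<And>y. y \<in> rel_interior X \<Longrightarrow> a \<bullet> x < a \<bullet> y"
    using supporting_hyperplane_relative_frontier[OF cvx[OF cb z0 sp] xc xr] by blast
  have "a \<bullet> x < 0" using a(3)[of 0] z0 ri by simp
  define s where "s = - (a \<bullet> x)"
  have s: "s > 0" using \<open>a \<bullet> x < 0\<close> by (simp add: s_def)
  define L where "L = (-1/s) *\<^sub>R a"
  define y where "y = J L"
  have "\<forall>b\<in>X. omega b y \<le> 1"
  proof
    fix b assume "b \<in> X"
    then have "a \<bullet> x \<le> a \<bullet> b" using a(2) closure_subset by blast
    then have "- (a \<bullet> b) / s \<le> 1" using s by (simp add: s_def divide_le_eq)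
    moreover have "omega b y = - (a \<bullet> b) / s"
      by (simp add: omega_def y_def inner_JJ L_def inner_commute)
    ultimately show "omega b y \<le> 1" by simp
  qed
  then have "y \<in> X" using polar_mem[OF cb z0 sp] by blast
  moreover have "omega x y = 1"
    using s by (simp add: omega_def y_def inner_JJ L_def inner_commute s_def)
  ultimately show ?thesis by blast
qed

lemma fmap_props:
  assumes x: "x \<in> frontier X"
  shows "symp_map X x \<in> X \<and> omega x (symp_map X x) = 1"
proof -
  have ex1: "\<exists>!y. y \<in> symp_polar X \<and> omega x y = 1"
    using fmap_exists[OF x] fmap_unique[OF x] sp by auto
  show ?thesis unfolding symp_map_def using theI'[OF ex1] sp by simp
qed

end



lemma calc1d:
  fixes \<phi> \<psi> :: "real \<Rightarrow> real"
  assumes p0: "\<phi> 0 = 0" and q0: "\<psi> 0 = 0" and d: "\<delta> > 0"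
    and der: "\<And>t. 0 \<le> t \<Longrightarrow> t < \<delta> \<Longrightarrow> (\<phi> has_real_derivative \<psi> t) (at t)"
    and der2: "(\<psi> has_real_derivative a) (at 0)"
    and pos: "\<And>t. 0 < t \<Longrightarrow> t < \<delta> \<Longrightarrow> \<phi> t > 0"
  shows "a \<ge> 0"
proof (rule ccontr)
  assume "\<not> a \<ge> 0"
  then have a: "a < 0" by simp
  from DERIV_neg_dec_right[OF der2 a] obtain d' where d': "d' > 0"
    "\<forall>h>0. h < d' \<longrightarrow> \<psi> 0 > \<psi> (0 + h)" by blast
  define t0 where "t0 = min \<delta> d' / 2"
  have t0: "t0 > 0" "t0 < \<delta>" "t0 < d'" using d d' by (simp_all add: t0_def)
  have "\<phi> 0 > \<phi> t0"
  proof (rule DERIV_neg_imp_decreasing_open[OF t0(1)])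
    fix x assume x: "0 < x" "x < t0"
    then have "\<psi> x < 0" using d' q0 t0 by auto
    then show "\<exists>y. (\<phi> has_real_derivative y) (at x) \<and> y < 0" using der[of x] x t0 by auto
  next
    show "continuous_on {0..t0} \<phi>"
    proof (intro continuous_at_imp_continuous_on ballI)
      fix x assume "x \<in> {0..t0}"
      then have "(\<phi> has_real_derivative \<psi> x) (at x)" using der t0 by auto
      then show "isCont \<phi> x" by (rule DERIV_isCont)
    qed
  qed
  then show False using pos[OF t0(1,2)] p0 by simp
qed

lemma chain_real:
  assumes "(\<rho> has_derivative blinfun_apply Dz) (at (z t))" "(z has_vector_derivative w) (at t)"
  shows "((\<lambda>s. \<rho> (z s)) has_real_derivative Dz w) (at t)"
proof -
  have "((\<lambda>s. \<rho> (z s)) has_derivative (\<lambda>h. Dz (h *\<^sub>R w))) (at t)"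
    using has_derivative_compose[OF assms(2)[unfolded has_vector_derivative_def] assms(1)] .
  then show ?thesis
    by (simp add: has_field_derivative_def blinfun.scaleR_right mult.commute[of _ "Dz w"])
qed

lemma chain_bil:
  assumes "(D has_derivative blinfun_apply D2z) (at (z t))" "(z has_vector_derivative z') (at t)"
    and "(w has_vector_derivative w') (at t)"
  shows "((\<lambda>s. blinfun_apply (D (z s)) (w s)) has_real_derivative (D2z z' (w t) + D (z t) w')) (at t)"
proof -
  have f: "((\<lambda>s. D (z s)) has_derivative (\<lambda>h. D2z (h *\<^sub>R z'))) (at t)"
    using has_derivative_compose[OF assms(2)[unfolded has_vector_derivative_def] assms(1)] .
  have g: "(w has_derivative (\<lambda>h. h *\<^sub>R w')) (at t)" using assms(3) by (simp add: has_vector_derivative_def)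
  have "((\<lambda>s. blinfun_apply (D (z s)) (w s)) has_derivative
      (\<lambda>h. blinfun_apply (D (z t)) (h *\<^sub>R w') + blinfun_apply (D2z (h *\<^sub>R z')) (w t))) (at t)"
    using bounded_bilinear.FDERIV[OF bounded_bilinear_blinfun_apply f g] .
  moreover have "(\<lambda>h. blinfun_apply (D (z t)) (h *\<^sub>R w') + blinfun_apply (D2z (h *\<^sub>R z')) (w t))
      = (\<lambda>h. (D2z z' (w t) + D (z t) w') * h)"
    by (rule ext) (simp add: blinfun.scaleR_right blinfun.scaleR_left algebra_simps)
  ultimately show ?thesis by (simp add: has_field_derivative_def)
qed




context
  fixes X :: "(complex ^ 'n) set"
  assumes cb: "convex_body X" and z0: "0 \<in> interior X" and sp: "symp_polar X = X"
    and c2: "C2_boundary X"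
begin

lemma Pr_nz:
  fixes Lg :: "complex^'n \<Rightarrow> real"
  assumes lin: "linear Lg" and Lp: "Lg p = 1" and Lxi: "Lg \<xi> = 0" and xi: "\<xi> \<noteq> 0" and p: "p \<noteq> 0"
  shows "Pr p \<xi> \<noteq> 0"
proof
  assume "Pr p \<xi> = 0"
  then have e: "\<xi> = (inner p \<xi> / (norm p)^2) *\<^sub>R p" by (simp add: Pr_def)
  then have "Lg \<xi> = (inner p \<xi> / (norm p)^2) * Lg p" using lin by (metis linear_scale real_scaleR_def)
  then have "inner p \<xi> / (norm p)^2 = 0" using Lp Lxi by simp
  then show False using e xi p by auto
qed

lemma part1:
  assumes p: "p \<in> frontier X"
  shows "positively_curved_at X p"
  unfolding positively_curved_at_def
proof (intro allI impI, elim conjE)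
  fix U \<rho> D D2 \<xi>
  assume L: "local_defining_fn X p U \<rho> D D2" and xi: "\<xi> \<noteq> 0" and Dxi: "D p \<xi> = 0"
  note l = ldf_unfold[OF L]
  have pnz: "p \<noteq> 0" using fr_nz[OF cb z0 sp p] .
  have cl: "closed X" using clo[OF cb z0 sp] .
  obtain c r where cr: "r > 0" "\<forall>z\<in>X. omega c z + r * norm z \<le> 1" "omega c p + r * norm p = 1"
    using supp_struct[OF cb z0 sp c2 p] by blast
  define Lg where "Lg = (\<lambda>z. omega c z + (r / norm p) * inner p z)"
  note LF = Lg_facts[OF cb z0 sp c2 p cr Lg_def]
  obtain k where k: "k > 0" "\<forall>v. Lg v = k * D p v"
    using normal_unique[OF cl p L LF(1,2,3)] by blast
  have Lxi: "Lg \<xi> = 0" using k Dxi by simp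
  have Dpp: "D p p = 1 / k" using k(2)[rule_format, of p] LF(3) k(1) by (simp add: field_simps)
  have Pxi: "Pr p \<xi> \<noteq> 0" using Pr_nz[OF LF(1) LF(3) Lxi xi pnz] .
  define \<kappa> where "\<kappa> = r * norm (Pr p \<xi>)^2 / (4 * norm p)"
  have kap: "\<kappa> > 0" using cr(1) Pxi pnz by (simp add: \<kappa>_def)
  define z where "z t = p + t *\<^sub>R \<xi> - (\<kappa> * t^2) *\<^sub>R p" for t :: real
  have notX: "z t \<notin> X" if t: "t \<noteq> 0" and zn: "norm (z t) < 2 * norm p" for t
  proof
    assume zX: "z t \<in> X"
    have Lz: "Lg (z t) = 1 - \<kappa> * t^2"
      using LF(1) LF(3) Lxi by (simp add: z_def linear_add linear_diff linear_scale)
    have Pz: "Pr p (z t) = t *\<^sub>R Pr p \<xi>"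
      using Pr_linear[of p] Pr_self[OF pnz] by (simp add: z_def linear_add linear_diff linear_scale)
    have nPz: "norm (Pr p (z t))^2 = t^2 * norm (Pr p \<xi>)^2"
      by (simp add: Pz power_mult_distrib)
    have Pzpos: "norm (Pr p (z t))^2 > 0" using nPz t Pxi by simp
    then have znz: "z t \<noteq> 0" using Pr_linear[of p] by (auto simp: linear_0)
    have A: "r * norm (Pr p \<xi>)^2 > 0" using cr(1) Pxi by simp
    have "r * norm (Pr p \<xi>)^2 / (4 * norm p) < r * norm (Pr p \<xi>)^2 / (2 * norm (z t))"
      using A zn znz pnz by (intro divide_strict_left_mono) auto
    then have "\<kappa> * t^2 < r * norm (Pr p \<xi>)^2 / (2 * norm (z t)) * t^2"
      unfolding \<kappa>_def by (rule mult_strict_right_mono) (use t in simp_all)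
    also have "\<dots> = r * norm (Pr p (z t))^2 / (2 * norm (z t))"
      by (simp add: nPz)
    also have "\<dots> \<le> omega c (z t) + r * norm (z t) - Lg (z t)" using LF(4) .
    finally have "omega c (z t) + r * norm (z t) > 1" using Lz by simp
    then show False using cr(2) zX by fastforce
  qed
  obtain \<epsilon> where e: "\<epsilon> > 0" "ball p \<epsilon> \<subseteq> U" using l(1,2) open_contains_ball by blast
  have zc: "continuous (at 0) z" unfolding z_def by (intro continuous_intros)
  obtain \<delta> where d: "\<delta> > 0" "\<forall>t. dist t 0 < \<delta> \<longrightarrow> dist (z t) (z 0) < min \<epsilon> (norm p)"
    using zc pnz e unfolding continuous_at_eps_delta by (metis min_less_iff_conj zero_less_norm_iff)
  have z0p: "z 0 = p" by (simp add: z_def)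
  have zU: "z t \<in> U" and zn: "norm (z t) < 2 * norm p" if "\<bar>t\<bar> < \<delta>" for t
  proof -
    have dd: "dist (z t) p < min \<epsilon> (norm p)" using d that z0p by simp
    then show "z t \<in> U" using e by (auto simp: dist_commute)
    have "norm (z t) \<le> norm p + dist (z t) p" by (metis dist_norm norm_triangle_sub add.commute)
    then show "norm (z t) < 2 * norm p" using dd by simp
  qed
  have rp: "\<rho> p = 0" using rho_zero[OF cl p L] .
  define \<psi> where "\<psi> s = D (z s) (\<xi> - (2 * \<kappa> * s) *\<^sub>R p)" for s
  have zder: "(z has_vector_derivative (\<xi> - (2 * \<kappa> * t) *\<^sub>R p)) (at t)" for t
    unfolding z_def
    by (auto intro!: derivative_eq_intros simp: algebra_simps)
  have der: "((\<lambda>s. \<rho> (z s)) has_real_derivative \<psi> t) (at t)" if "0 \<le> t" "t < \<delta>" for t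
  proof -
    have "z t \<in> U" using zU that by simp
    then show ?thesis unfolding \<psi>_def using chain_real[OF l(3) zder] by blast
  qed
  have wder: "((\<lambda>s. \<xi> - (2 * \<kappa> * s) *\<^sub>R p) has_vector_derivative (- (2 * \<kappa>) *\<^sub>R p)) (at 0)"
    by (auto intro!: derivative_eq_intros)
  have der2: "(\<psi> has_real_derivative (D2 p \<xi> \<xi> + D p (- (2 * \<kappa>) *\<^sub>R p))) (at 0)"
  proof -
    have "(D has_derivative blinfun_apply (D2 (z 0))) (at (z 0))" using l(4) l(2) z0p by simp
    from chain_bil[OF this zder wder] show ?thesis unfolding \<psi>_def using z0p by simp
  qed
  have "D2 p \<xi> \<xi> + D p (- (2 * \<kappa>) *\<^sub>R p) \<ge> 0"
  proof (rule calc1d[OF _ _ d(1) der der2])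
    show "\<rho> (z 0) = 0" using z0p rp by simp
    show "\<psi> 0 = 0" using Dxi z0p by (simp add: \<psi>_def)
    fix t :: real assume t: "0 < t" "t < \<delta>"
    then have "z t \<notin> X" using notX zn by simp
    moreover have "z t \<in> U" using zU t by simp
    ultimately show "\<rho> (z t) > 0" using ldf_mem[OF L] by fastforce
  qed
  then have "D2 p \<xi> \<xi> \<ge> 2 * \<kappa> * (1 / k)" using Dpp by (simp add: blinfun.scaleR_right blinfun.minus_right)
  moreover have "2 * \<kappa> * (1 / k) > 0" using kap k by simp
  ultimately show "D2 p \<xi> \<xi> > 0" by linarith
qed

end



context
  fixes X :: "(complex ^ 'n) set"
  assumes cb: "convex_body X" and z0: "0 \<in> interior X" and sp: "symp_polar X = X"
    and c2: "C2_boundary X"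
begin

lemma part2:
  assumes x: "x \<in> frontier X" and e: "e > 0" and gam: "\<gamma> ` {-e<..<e} \<subseteq> frontier X"
    and g0: "\<gamma> 0 = x" and gd: "(\<gamma> has_vector_derivative \<xi>) (at 0)" and xi: "\<xi> \<noteq> 0"
    and yd: "((symp_map X \<circ> \<gamma>) has_vector_derivative v) (at 0)"
  shows "omega \<xi> v > 0"
proof -
  define y where "y = symp_map X \<circ> \<gamma>"
  define y0 where "y0 = y 0"
  have cl: "closed X" using clo[OF cb z0 sp] .
  have xX: "x \<in> X" using x fr_sub[OF cb z0 sp] by blast
  have xnz: "x \<noteq> 0" using fr_nz[OF cb z0 sp x] .
  have ty: "y t \<in> X \<and> omega (\<gamma> t) (y t) = 1 \<and> \<gamma> t \<in> X" if "\<bar>t\<bar> < e" for t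
  proof -
    have "t \<in> {-e<..<e}" using that by auto
    then have "\<gamma> t \<in> frontier X" using gam by blast
    then show ?thesis using fmap_props[OF cb z0 sp c2] fr_sub[OF cb z0 sp] by (auto simp: y_def)
  qed
  have y0X: "y0 \<in> X" and xy0: "omega x y0 = 1" using ty[of 0] e g0 by (auto simp: y0_def)
  obtain c r where cr: "r > 0" "\<forall>z\<in>X. omega c z + r * norm z \<le> 1" "omega c x + r * norm x = 1"
    using supp_struct[OF cb z0 sp c2 x] by blast
  define Lg where "Lg = (\<lambda>z. omega c z + (r / norm x) * inner x z)"
  note LF = Lg_facts[OF cb z0 sp c2 x cr Lg_def]
  obtain U \<rho> D D2 where L: "local_defining_fn X x U \<rho> D D2" using c2 x unfolding C2_boundary_def by blast
  obtain k1 where k1: "k1 > 0" "\<forall>w. Lg w = k1 * D x w"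
    using normal_unique[OF cl x L LF(1,2,3)] by blast
  have llin: "linear (\<lambda>z. omega z y0)" by (intro linearI) (simp_all add: omega_add1 omega_scale1)
  have lle: "\<forall>z\<in>X. omega z y0 \<le> 1" using om_le1[OF cb z0 sp _ y0X] by blast
  obtain k2 where k2: "k2 > 0" "\<forall>w. omega w y0 = k2 * D x w"
    using normal_unique[OF cl x L llin lle xy0] by blast
  have "k1 * D x x = k2 * D x x" using k1(2) k2(2) LF(3) xy0 by metis
  moreover have "D x x \<noteq> 0" using k1(2) LF(3) by (metis mult_zero_right zero_neq_one)
  ultimately have "k1 = k2" by simp
  then have ell: "omega w y0 = Lg w" for w using k1(2) k2(2) by simp
  have blin: "bounded_linear (\<lambda>z. omega z y0)"
    using bounded_bilinear.bounded_linear_left[OF bounded_bilinear_omega] .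
  have "((\<lambda>t. omega (\<gamma> t) y0) has_derivative (\<lambda>h. omega (h *\<^sub>R \<xi>) y0)) (at 0)"
    using has_derivative_compose[OF gd[unfolded has_vector_derivative_def]
        bounded_linear_imp_has_derivative[OF blin]] .
  then have dl: "((\<lambda>t. omega (\<gamma> t) y0) has_real_derivative omega \<xi> y0) (at 0)"
    by (simp add: has_field_derivative_def omega_scale1 mult.commute[of _ "omega \<xi> y0"])
  have "omega \<xi> y0 = 0"
  proof (rule DERIV_local_max[OF dl e])
    show "\<forall>s. \<bar>0 - s\<bar> < e \<longrightarrow> omega (\<gamma> s) y0 \<le> omega (\<gamma> 0) y0"
      using ty lle g0 xy0 by auto
  qed
  then have Lxi: "Lg \<xi> = 0" using ell by simp
  have Pxi: "Pr x \<xi> \<noteq> 0" using Pr_nz[OF cb z0 sp c2 LF(1) LF(3) Lxi xi xnz] .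
  have q1: "((\<lambda>t. (1/t) *\<^sub>R (\<gamma> t - x)) \<longlongrightarrow> \<xi>) (at 0)" using vd_quot[OF gd] g0 by simp
  have q2: "((\<lambda>t. (1/t) *\<^sub>R (y t - y0)) \<longlongrightarrow> v) (at 0)" using vd_quot[OF yd] by (simp add: y_def y0_def)
  have FL: "((\<lambda>t. omega ((1/t) *\<^sub>R (\<gamma> t - x)) ((1/t) *\<^sub>R (y t - y0))) \<longlongrightarrow> omega \<xi> v) (at 0)"
    using bounded_bilinear.tendsto[OF bounded_bilinear_omega q1 q2] .
  have gc: "(\<gamma> \<longlongrightarrow> x) (at 0)"
    using has_vector_derivative_continuous[OF gd] g0 by (simp add: isCont_def)
  have GL: "((\<lambda>t. r * norm (Pr x ((1/t) *\<^sub>R (\<gamma> t - x)))^2 / (2 * norm (\<gamma> t)))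
      \<longlongrightarrow> r * norm (Pr x \<xi>)^2 / (2 * norm x)) (at 0)"
    unfolding Pr_def using xnz by (intro tendsto_intros q1 gc) auto
  have ev: "\<forall>\<^sub>F t in at 0. r * norm (Pr x ((1/t) *\<^sub>R (\<gamma> t - x)))^2 / (2 * norm (\<gamma> t))
      \<le> omega ((1/t) *\<^sub>R (\<gamma> t - x)) ((1/t) *\<^sub>R (y t - y0))"
    unfolding eventually_at
  proof (intro exI[of _ e] conjI e ballI impI)
    fix t :: real assume t: "t \<noteq> 0 \<and> dist t 0 < e"
    then have te: "\<bar>t\<bar> < e" by simp
    note T = ty[OF te]
    have "omega (\<gamma> t - x) (y t - y0) = 2 - omega (\<gamma> t) y0 - omega x (y t)"
      using T xy0 by (simp add: omega_diff1 omega_diff2)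
    moreover have "omega x (y t) \<le> 1" using om_le1[OF cb z0 sp xX] T by blast
    ultimately have A: "omega (\<gamma> t - x) (y t - y0) \<ge> 1 - Lg (\<gamma> t)" using ell by simp
    have "omega c (\<gamma> t) + r * norm (\<gamma> t) \<le> 1" using cr(2) T by blast
    then have B: "1 - Lg (\<gamma> t) \<ge> r * norm (Pr x (\<gamma> t))^2 / (2 * norm (\<gamma> t))" using LF(4)[of "\<gamma> t"] by linarith
    have "Pr x (\<gamma> t) = t *\<^sub>R Pr x ((1/t) *\<^sub>R (\<gamma> t - x))"
      using Pr_linear[of x] Pr_self[OF xnz] t by (simp add: linear_diff linear_scale)
    then have C: "norm (Pr x (\<gamma> t))^2 = t^2 * norm (Pr x ((1/t) *\<^sub>R (\<gamma> t - x)))^2"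
      by (simp add: power_mult_distrib)
    have D: "omega ((1/t) *\<^sub>R (\<gamma> t - x)) ((1/t) *\<^sub>R (y t - y0)) = omega (\<gamma> t - x) (y t - y0) / t^2"
      by (simp add: omega_scale1 omega_scale2 power2_eq_square)
    have "r * norm (Pr x ((1/t) *\<^sub>R (\<gamma> t - x)))^2 / (2 * norm (\<gamma> t))
        = (r * norm (Pr x (\<gamma> t))^2 / (2 * norm (\<gamma> t))) / t^2"
      using t by (simp add: C field_simps)
    also have "\<dots> \<le> omega (\<gamma> t - x) (y t - y0) / t^2"
      using A B t by (intro divide_right_mono) auto
    finally show "r * norm (Pr x ((1/t) *\<^sub>R (\<gamma> t - x)))^2 / (2 * norm (\<gamma> t))
      \<le> omega ((1/t) *\<^sub>R (\<gamma> t - x)) ((1/t) *\<^sub>R (y t - y0))" using D by simp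
  qed
  have "r * norm (Pr x \<xi>)^2 / (2 * norm x) \<le> omega \<xi> v"
    using tendsto_le[OF trivial_limit_at FL GL ev] by simp
  moreover have "r * norm (Pr x \<xi>)^2 / (2 * norm x) > 0" using cr(1) Pxi xnz by simp
  ultimately show ?thesis by linarith
qed

end

theorem lemma2p3:
  fixes X :: "(complex ^ 'n) set"
  assumes "convex_body X" and "0 \<in> interior X"
    and "symp_polar X = X"
    and "C2_boundary X"
  shows "(\<forall>p\<in>frontier X. positively_curved_at X p) \<and>
         (\<forall>x\<in>frontier X. \<forall>\<gamma> e \<xi> v.
            e > 0 \<and> \<gamma> ` {-e<..<e} \<subseteq> frontier X \<and> \<gamma> 0 = x \<and>
            (\<gamma> has_vector_derivative \<xi>) (at 0) \<and> \<xi> \<noteq> 0 \<and>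
            ((symp_map X \<circ> \<gamma>) has_vector_derivative v) (at 0)
            \<longrightarrow> omega \<xi> v > 0)"
  using part1[OF assms] part2[OF assms] by blast

end
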